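(* Let $P_n$ be a labeled path such that the number of left-upper corners of its ribbon diagram $RT(P_n)$ differs from the number of right-lower corners of $RT(P_n)$. Then $X(P_n;\mathbf{x},q)$ is not palindromic, and hence not symmetric.
   Context: A labeled path $P_n$ is the path graph with vertices $v_1,\dots,v_n$ (edges $v_iv_{i+1}$) where $v_i$ carries label $\sigma_i$ for a permutation $\sigma$ of $[n]$; vertices are identified with labels. A proper coloring is $c\colon[n]\to\{1,2,\dots\}$ with adjacent vertices colored differently; $\operatorname{asc}(c)=\#\{ij\in E: i<j,\ c(i)<c(j)\}$. The CQF is $X(P_n;\mathbf{x},q)=\sum_{c \text{ proper}} x_{c(1)}\cdots x_{c(n)}q^{\operatorname{asc}(c)}$. It is symmetric if each coefficient of $q^k$ is a symmetric function, and palindromic if the coefficient of $q^k$ equals that of $q^{(n-1)-k}$ for all $k$. The ad-pattern of $P_n$ is $w_1\cdots w_{n-1}$ with $w_i=a$ if $\sigma_i<\sigma_{i+1}$ and $w_i=d$ otherwise. The ribbon diagram $RT(P_n)$ consists of $n$ unit boxes placed in the plane: start with box $1$, and for $i=1,\dots,n-1$ place box $i+1$ immediately to the right of box $i$ if $w_i=a$ and immediately above box $i$ if $w_i=d$. A left-upper (LU) corner is a box with no box immediately to its left and no box immediately above it; a right-lower (RL) corner is a box with no box immediately to its right and no box immediately below it. *)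

theory Defs
  imports Main
begin

text \<open>A labeled path P_n is given by the list s = [sigma_1, ..., sigma_n] of labels,
  a permutation of [n]. Position i (0-based) is vertex v_(i+1); vertices are identified with labels.\<close>

definition labeled_path :: "nat list \<Rightarrow> bool" where
  "labeled_path s \<longleftrightarrow> distinct s \<and> set s = {1..length s}"

definition proper_col :: "nat list \<Rightarrow> (nat \<Rightarrow> nat) \<Rightarrow> bool" where
  "proper_col s c \<longleftrightarrow> (\<forall>i. Suc i < length s \<longrightarrow> c (s ! i) \<noteq> c (s ! Suc i))"

definition asc :: "nat list \<Rightarrow> (nat \<Rightarrow> nat) \<Rightarrow> nat" where
  "asc s c = card {i. Suc i < length s \<and>
      c (min (s ! i) (s ! Suc i)) < c (max (s ! i) (s ! Suc i))}"

text \<open>Coefficient of q^k x^alpha in X(P_n; x, q): colors are positive integers, variables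
  x_1, x_2, ...; a monomial is an exponent function alpha (alpha j = exponent of x_j).
  Colorings are taken extensional (value 0 outside the vertex set [n]).\<close>
definition cqf_coeff :: "nat list \<Rightarrow> nat \<Rightarrow> (nat \<Rightarrow> nat) \<Rightarrow> nat" where
  "cqf_coeff s k alpha = card {c. (\<forall>v. v \<notin> {1..length s} \<longrightarrow> c v = 0)
       \<and> (\<forall>v\<in>{1..length s}. 1 \<le> c v) \<and> proper_col s c \<and> asc s c = k
       \<and> (\<forall>j. card {v\<in>{1..length s}. c v = j} = alpha j)}"

definition cqf_palindromic :: "nat list \<Rightarrow> bool" where
  "cqf_palindromic s \<longleftrightarrow>
     (\<forall>k alpha. k \<le> length s - 1 \<longrightarrow>
        cqf_coeff s k alpha = cqf_coeff s (length s - 1 - k) alpha)"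

text \<open>Symmetric: each q^k coefficient is invariant under permutations of the variables
  x_1, x_2, ... (bijections of nat fixing 0, the unused index).\<close>
definition cqf_symmetric :: "nat list \<Rightarrow> bool" where
  "cqf_symmetric s \<longleftrightarrow>
     (\<forall>k alpha \<pi>. bij \<pi> \<and> \<pi> 0 = 0 \<longrightarrow> cqf_coeff s k (alpha \<circ> \<pi>) = cqf_coeff s k alpha)"

fun box_pos :: "nat list \<Rightarrow> nat \<Rightarrow> int \<times> int" where
  "box_pos s 0 = (0, 0)"
| "box_pos s (Suc i) = (let (x, y) = box_pos s i in
      if s ! i < s ! Suc i then (x + 1, y) else (x, y + 1))"

definition ribbon :: "nat list \<Rightarrow> (int \<times> int) set" where
  "ribbon s = box_pos s ` {..<length s}"

definition LU_corners :: "nat list \<Rightarrow> nat" where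
  "LU_corners s = card {(x, y) \<in> ribbon s. (x - 1, y) \<notin> ribbon s \<and> (x, y + 1) \<notin> ribbon s}"

definition RL_corners :: "nat list \<Rightarrow> nat" where
  "RL_corners s = card {(x, y) \<in> ribbon s. (x + 1, y) \<notin> ribbon s \<and> (x, y - 1) \<notin> ribbon s}"

end

theory Submission imports Defs begin

definition aa :: "nat list \<Rightarrow> nat \<Rightarrow> bool" where "aa s i \<longleftrightarrow> s!i < s!Suc i"
definition minset :: "nat \<Rightarrow> (nat \<Rightarrow> bool) \<Rightarrow> nat set" where
 "minset n b = {i. i<n \<and> (i=0 \<or> \<not> b (i-1)) \<and> (Suc i = n \<or> b i)}"

lemma box_sum: "fst (box_pos s i) + snd (box_pos s i) = int i"
  by (induction i) (auto split: prod.splits)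

lemma box_Suc: "box_pos s (Suc i) = (if aa s i then (fst (box_pos s i) + 1, snd (box_pos s i))
   else (fst (box_pos s i), snd (box_pos s i) + 1))"
  by (simp add: aa_def split: prod.splits)

lemma ribbon_iff: "p \<in> ribbon s \<longleftrightarrow> (\<exists>j<length s. box_pos s j = p)"
  unfolding ribbon_def by auto

lemma box_inj: "box_pos s i = box_pos s j \<Longrightarrow> i = j"
  by (metis box_sum of_nat_eq_iff)

lemma left_in:
  assumes "i < length s" "box_pos s i = (x,y)"
  shows "(x-1,y) \<in> ribbon s \<longleftrightarrow> (i \<noteq> 0 \<and> aa s (i-1))"
proof
  assume "(x-1,y) \<in> ribbon s"
  then obtain j where j: "j < length s" "box_pos s j = (x-1,y)" by (auto simp: ribbon_iff)
  have "int j = x - 1 + y" using box_sum[of s j] j by simp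
  moreover have "int i = x + y" using box_sum[of s i] assms by simp
  ultimately have ij: "i = Suc j" by linarith
  show "i \<noteq> 0 \<and> aa s (i-1)"
  proof (rule ccontr)
    assume "\<not> ?thesis"
    then have "\<not> aa s j" using ij by simp
    then have "box_pos s i = (x-1, y+1)" using ij box_Suc[of s j] j by simp
    then show False using assms by simp
  qed
next
  assume "i \<noteq> 0 \<and> aa s (i-1)"
  then obtain j where ij: "i = Suc j" "aa s j" by (cases i) auto
  then have "box_pos s j = (x-1,y)" using box_Suc[of s j] assms(2) by (cases "box_pos s j") auto
  then show "(x-1,y) \<in> ribbon s" using ij assms(1) by (auto simp: ribbon_iff intro!: exI[of _ j])
qed

lemma down_in:
  assumes "i < length s" "box_pos s i = (x,y)"
  shows "(x,y-1) \<in> ribbon s \<longleftrightarrow> (i \<noteq> 0 \<and> \<not> aa s (i-1))"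
proof
  assume "(x,y-1) \<in> ribbon s"
  then obtain j where j: "j < length s" "box_pos s j = (x,y-1)" by (auto simp: ribbon_iff)
  have "int j = x + y - 1" using box_sum[of s j] j by simp
  moreover have "int i = x + y" using box_sum[of s i] assms by simp
  ultimately have ij: "i = Suc j" by linarith
  show "i \<noteq> 0 \<and> \<not> aa s (i-1)"
  proof (rule ccontr)
    assume "\<not> ?thesis"
    then have "aa s j" using ij by simp
    then have "box_pos s i = (x+1, y-1)" using ij box_Suc[of s j] j by simp
    then show False using assms by simp
  qed
next
  assume "i \<noteq> 0 \<and> \<not> aa s (i-1)"
  then obtain j where ij: "i = Suc j" "\<not> aa s j" by (cases i) auto
  then have "box_pos s j = (x,y-1)" using box_Suc[of s j] assms(2) by (cases "box_pos s j") auto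
  then show "(x,y-1) \<in> ribbon s" using ij assms(1) by (auto simp: ribbon_iff intro!: exI[of _ j])
qed

lemma right_in:
  assumes "i < length s" "box_pos s i = (x,y)"
  shows "(x+1,y) \<in> ribbon s \<longleftrightarrow> (Suc i < length s \<and> aa s i)"
proof
  assume "(x+1,y) \<in> ribbon s"
  then obtain j where j: "j < length s" "box_pos s j = (x+1,y)" by (auto simp: ribbon_iff)
  have "int j = x + 1 + y" using box_sum[of s j] j by simp
  moreover have "int i = x + y" using box_sum[of s i] assms by simp
  ultimately have ij: "j = Suc i" by linarith
  show "Suc i < length s \<and> aa s i"
  proof (rule ccontr)
    assume "\<not> ?thesis"
    then have "\<not> aa s i" using ij j by simp
    then have "box_pos s j = (x, y+1)" using ij box_Suc[of s i] assms by simp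
    then show False using j by simp
  qed
next
  assume a: "Suc i < length s \<and> aa s i"
  then have "box_pos s (Suc i) = (x+1,y)" using box_Suc[of s i] assms(2) by simp
  then show "(x+1,y) \<in> ribbon s" using a by (auto simp: ribbon_iff)
qed

lemma up_in:
  assumes "i < length s" "box_pos s i = (x,y)"
  shows "(x,y+1) \<in> ribbon s \<longleftrightarrow> (Suc i < length s \<and> \<not> aa s i)"
proof
  assume "(x,y+1) \<in> ribbon s"
  then obtain j where j: "j < length s" "box_pos s j = (x,y+1)" by (auto simp: ribbon_iff)
  have "int j = x + y + 1" using box_sum[of s j] j by simp
  moreover have "int i = x + y" using box_sum[of s i] assms by simp
  ultimately have ij: "j = Suc i" by linarith
  show "Suc i < length s \<and> \<not> aa s i"
  proof (rule ccontr)
    assume "\<not> ?thesis"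
    then have "aa s i" using ij j by simp
    then have "box_pos s j = (x+1, y)" using ij box_Suc[of s i] assms by simp
    then show False using j by simp
  qed
next
  assume a: "Suc i < length s \<and> \<not> aa s i"
  then have "box_pos s (Suc i) = (x,y+1)" using box_Suc[of s i] assms(2) by simp
  then show "(x,y+1) \<in> ribbon s" using a by (auto simp: ribbon_iff)
qed

lemma LU_eq: "LU_corners s = card (minset (length s) (aa s))"
proof -
  have "{(x, y) \<in> ribbon s. (x - 1, y) \<notin> ribbon s \<and> (x, y + 1) \<notin> ribbon s}
      = box_pos s ` minset (length s) (aa s)"
  proof (intro set_eqI iffI)
    fix p assume "p \<in> {(x, y) \<in> ribbon s. (x - 1, y) \<notin> ribbon s \<and> (x, y + 1) \<notin> ribbon s}"
    then obtain x y where p: "p = (x,y)" "(x,y) \<in> ribbon s" "(x-1,y) \<notin> ribbon s" "(x,y+1) \<notin> ribbon s"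
      by auto
    then obtain j where j: "j < length s" "box_pos s j = (x,y)" by (auto simp: ribbon_iff)
    have "j \<in> minset (length s) (aa s)"
      using left_in[OF j] up_in[OF j] p j(1) by (cases "Suc j < length s") (auto simp: minset_def)
    then show "p \<in> box_pos s ` minset (length s) (aa s)" using j p by (metis image_eqI)
  next
    fix p assume "p \<in> box_pos s ` minset (length s) (aa s)"
    then obtain j where j: "j \<in> minset (length s) (aa s)" "p = box_pos s j" by auto
    obtain x y where xy: "box_pos s j = (x,y)" by fastforce
    have jl: "j < length s" using j by (auto simp: minset_def)
    show "p \<in> {(x, y) \<in> ribbon s. (x - 1, y) \<notin> ribbon s \<and> (x, y + 1) \<notin> ribbon s}"
      using left_in[OF jl xy] up_in[OF jl xy] j xy jl by (auto simp: minset_def ribbon_iff)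
  qed
  moreover have "inj_on (box_pos s) A" for A by (rule inj_onI) (rule box_inj)
  ultimately show ?thesis unfolding LU_corners_def by (simp add: card_image)
qed

lemma RL_eq: "RL_corners s = card (minset (length s) (\<lambda>i. \<not> aa s i))"
proof -
  have "{(x, y) \<in> ribbon s. (x + 1, y) \<notin> ribbon s \<and> (x, y - 1) \<notin> ribbon s}
      = box_pos s ` minset (length s) (\<lambda>i. \<not> aa s i)"
  proof (intro set_eqI iffI)
    fix p assume "p \<in> {(x, y) \<in> ribbon s. (x + 1, y) \<notin> ribbon s \<and> (x, y - 1) \<notin> ribbon s}"
    then obtain x y where p: "p = (x,y)" "(x,y) \<in> ribbon s" "(x+1,y) \<notin> ribbon s" "(x,y-1) \<notin> ribbon s"
      by auto
    then obtain j where j: "j < length s" "box_pos s j = (x,y)" by (auto simp: ribbon_iff)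
    have "j \<in> minset (length s) (\<lambda>i. \<not> aa s i)"
      using right_in[OF j] down_in[OF j] p j(1) by (cases "Suc j < length s") (auto simp: minset_def)
    then show "p \<in> box_pos s ` minset (length s) (\<lambda>i. \<not> aa s i)" using j p by (metis image_eqI)
  next
    fix p assume "p \<in> box_pos s ` minset (length s) (\<lambda>i. \<not> aa s i)"
    then obtain j where j: "j \<in> minset (length s) (\<lambda>i. \<not> aa s i)" "p = box_pos s j" by auto
    obtain x y where xy: "box_pos s j = (x,y)" by fastforce
    have jl: "j < length s" using j by (auto simp: minset_def)
    show "p \<in> {(x, y) \<in> ribbon s. (x + 1, y) \<notin> ribbon s \<and> (x, y - 1) \<notin> ribbon s}"
      using right_in[OF jl xy] down_in[OF jl xy] j xy jl by (auto simp: minset_def ribbon_iff)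
  qed
  moreover have "inj_on (box_pos s) A" for A by (rule inj_onI) (rule box_inj)
  ultimately show ?thesis unfolding RL_corners_def by (simp add: card_image)
qed


fun runup :: "(nat \<Rightarrow> bool) \<Rightarrow> nat \<Rightarrow> nat" where
  "runup b 0 = 0" | "runup b (Suc i) = (if b i then Suc (runup b i) else 0)"

function rundown :: "(nat \<Rightarrow> bool) \<Rightarrow> nat \<Rightarrow> nat \<Rightarrow> nat" where
  "rundown b n i = (if Suc i < n \<and> \<not> b i then Suc (rundown b n (Suc i)) else 0)"
  by auto
termination by (relation "measure (\<lambda>(b,n,i). n - i)") auto
declare rundown.simps[simp del]

definition cc :: "(nat \<Rightarrow> bool) \<Rightarrow> nat \<Rightarrow> nat \<Rightarrow> nat" where
  "cc b n i = Suc (max (runup b i) (rundown b n i))"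

lemma cc_dir: "Suc i < n \<Longrightarrow> (cc b n i < cc b n (Suc i) \<longleftrightarrow> b i) \<and> cc b n i \<noteq> cc b n (Suc i)"
  by (cases "b i") (auto simp: cc_def rundown.simps[of b n i])

lemma rundown0: "rundown b n i = 0 \<longleftrightarrow> \<not> (Suc i < n \<and> \<not> b i)"
  by (subst rundown.simps) auto

lemma runup0: "runup b i = 0 \<longleftrightarrow> (i = 0 \<or> \<not> b (i-1))"
  by (cases i) auto

lemma cc_one: "i < n \<Longrightarrow> (cc b n i = 1 \<longleftrightarrow> i \<in> minset n b)"
  unfolding cc_def minset_def using rundown0[of b n i] runup0[of b i] by auto

lemma cc_pos: "1 \<le> cc b n i" by (simp add: cc_def)

lemma min_sub:
  assumes "\<And>i. Suc i < n \<Longrightarrow> (d i < d (Suc i) \<longleftrightarrow> b i)"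
    "\<And>i. Suc i < n \<Longrightarrow> d i \<noteq> d (Suc i)" "\<And>i. i<n \<Longrightarrow> 1 \<le> (d i :: nat)"
  shows "{i. i<n \<and> d i = 1} \<subseteq> minset n b"
proof
  fix i assume "i \<in> {i. i<n \<and> d i = 1}"
  hence i: "i<n" "d i = 1" by auto
  have "i = 0 \<or> \<not> b (i-1)"
  proof (cases i)
    case (Suc j) then have "d j \<ge> 1" "d j \<noteq> d i" using assms(2)[of j] assms(3)[of j] i by auto
    hence "\<not> d j < d (Suc j)" using Suc i by auto
    then show ?thesis using assms(1)[of j] Suc i by auto
  qed simp
  moreover have "Suc i = n \<or> b i"
  proof (cases "Suc i < n")
    case True then have "d (Suc i) \<ge> 1" "d (Suc i) \<noteq> d i" using assms(2)[of i] assms(3)[of "Suc i"] i by auto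
    hence "d i < d (Suc i)" using i by auto
    then show ?thesis using assms(1)[of i] True by auto
  qed (use i in auto)
  ultimately show "i \<in> minset n b" using i by (auto simp: minset_def)
qed

lemma max_sub:
  assumes "\<And>i. Suc i < n \<Longrightarrow> (d i < d (Suc i) \<longleftrightarrow> b i)"
    "\<And>i. Suc i < n \<Longrightarrow> d i \<noteq> d (Suc i)" "\<And>i. i<n \<Longrightarrow> (d i :: nat) \<le> M"
  shows "{i. i<n \<and> d i = M} \<subseteq> minset n (\<lambda>i. \<not> b i)"
proof
  fix i assume "i \<in> {i. i<n \<and> d i = M}"
  hence i: "i<n" "d i = M" by auto
  have "i = 0 \<or> b (i-1)"
  proof (cases i)
    case (Suc j) then have "d j \<le> M" "d j \<noteq> d i" using assms(2)[of j] assms(3)[of j] i by auto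
    hence "d j < d (Suc j)" using Suc i by auto
    then show ?thesis using assms(1)[of j] Suc i by auto
  qed simp
  moreover have "Suc i = n \<or> \<not> b i"
  proof (cases "Suc i < n")
    case True then have "d (Suc i) \<le> M" "d (Suc i) \<noteq> d i" using assms(2)[of i] assms(3)[of "Suc i"] i by auto
    hence "\<not> d i < d (Suc i)" using i by auto
    then show ?thesis using assms(1)[of i] True by auto
  qed (use i in auto)
  ultimately show "i \<in> minset n (\<lambda>i. \<not> b i)" using i by (auto simp: minset_def)
qed

lemma card_type:
  assumes "labeled_path s"
  shows "card {v \<in> {1..length s}. c v = j} = card {i. i < length s \<and> c (s!i) = j}"
proof -
  have d: "distinct s" and st: "set s = {1..length s}" using assms by (auto simp: labeled_path_def)
  have "{v \<in> set s. c v = j} = (nth s) ` {i. i<length s \<and> c (s!i) = j}"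
    by (auto simp: in_set_conv_nth)
  moreover have "inj_on (nth s) {i. i<length s \<and> c (s!i) = j}" using d by (auto intro!: inj_on_nth)
  ultimately show ?thesis using st by (simp add: card_image)
qed

definition dirP :: "nat list \<Rightarrow> (nat \<Rightarrow> nat) \<Rightarrow> (nat \<Rightarrow> bool) \<Rightarrow> bool" where
  "dirP s c b \<longleftrightarrow> (\<forall>i. Suc i < length s \<longrightarrow> (c (s!i) < c (s!Suc i) \<longleftrightarrow> b i))"

lemma edge_lemma:
  fixes c :: "nat \<Rightarrow> nat"
  assumes "x \<noteq> y" "c x \<noteq> c y"
  shows "c (min x y) < c (max x y) \<longleftrightarrow> (c x < c y \<longleftrightarrow> x < y)"
proof (cases "x < y")
  case True then show ?thesis by (simp add: min_def max_def)
next
  case False then have "y < x" using assms(1) by simp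
  then show ?thesis using assms(2) False by (auto simp: min_def max_def)
qed

lemma edge_facts:
  assumes lp: "labeled_path s" and pc: "proper_col s c" and i: "Suc i < length s"
  shows "c (min (s!i) (s!Suc i)) < c (max (s!i) (s!Suc i)) \<longleftrightarrow> (c (s!i) < c (s!Suc i) \<longleftrightarrow> aa s i)"
proof -
  have "distinct s" using lp unfolding labeled_path_def by blast
  hence ne: "s!i \<noteq> s!Suc i" using nth_eq_iff_index_eq[of s i "Suc i"] i by simp
  have pn: "c (s!i) \<noteq> c (s!Suc i)" using pc i unfolding proper_col_def by blast
  show ?thesis using edge_lemma[OF ne pn] unfolding aa_def .
qed

lemma asc_top:
  assumes lp: "labeled_path s" and pc: "proper_col s c"
  shows "asc s c = length s - 1 \<longleftrightarrow> dirP s c (aa s)"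
proof -
  let ?E = "{i. Suc i < length s \<and> c (min (s!i) (s!Suc i)) < c (max (s!i) (s!Suc i))}"
  have sub: "?E \<subseteq> {..<length s - 1}" by auto
  have "asc s c = length s - 1 \<longleftrightarrow> ?E = {..<length s - 1}"
  proof
    assume "asc s c = length s - 1"
    hence "card ?E = card {..<length s - 1}" unfolding asc_def by simp
    then show "?E = {..<length s - 1}" by (rule card_subset_eq[OF finite_lessThan sub])
  next
    assume "?E = {..<length s - 1}"
    then show "asc s c = length s - 1" unfolding asc_def by simp
  qed
  also have "\<dots> \<longleftrightarrow> (\<forall>i. Suc i < length s \<longrightarrow> c (min (s!i) (s!Suc i)) < c (max (s!i) (s!Suc i)))"
  proof
    assume eq: "?E = {..<length s - 1}"
    show "\<forall>i. Suc i < length s \<longrightarrow> c (min (s!i) (s!Suc i)) < c (max (s!i) (s!Suc i))"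
    proof (intro allI impI)
      fix i assume "Suc i < length s"
      hence "i \<in> {..<length s - 1}" by simp
      hence "i \<in> ?E" by (simp only: eq)
      thus "c (min (s!i) (s!Suc i)) < c (max (s!i) (s!Suc i))" by blast
    qed
  next
    assume all: "\<forall>i. Suc i < length s \<longrightarrow> c (min (s!i) (s!Suc i)) < c (max (s!i) (s!Suc i))"
    show "?E = {..<length s - 1}"
    proof (rule subset_antisym[OF sub], rule subsetI)
      fix i assume "i \<in> {..<length s - 1}"
      hence "Suc i < length s" by simp
      thus "i \<in> ?E" using all by blast
    qed
  qed
  also have "\<dots> \<longleftrightarrow> dirP s c (aa s)"
    unfolding dirP_def using edge_facts[OF lp pc] by blast
  finally show ?thesis .
qed

lemma asc_bot:
  assumes lp: "labeled_path s" and pc: "proper_col s c"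
  shows "asc s c = 0 \<longleftrightarrow> dirP s c (\<lambda>i. \<not> aa s i)"
proof -
  let ?E = "{i. Suc i < length s \<and> c (min (s!i) (s!Suc i)) < c (max (s!i) (s!Suc i))}"
  have fin: "finite ?E" by (rule finite_subset[of _ "{..<length s}"]) auto
  have "asc s c = 0 \<longleftrightarrow> ?E = {}" unfolding asc_def using fin by simp
  also have "\<dots> \<longleftrightarrow> (\<forall>i. Suc i < length s \<longrightarrow> \<not> c (min (s!i) (s!Suc i)) < c (max (s!i) (s!Suc i)))"
    by blast
  also have "\<dots> \<longleftrightarrow> dirP s c (\<lambda>i. \<not> aa s i)"
    unfolding dirP_def using edge_facts[OF lp pc] by blast
  finally show ?thesis .
qed


lemma coeff_finite:
  fixes M n :: nat and \<beta> :: "nat \<Rightarrow> nat"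
  assumes big: "\<And>j. j > M \<Longrightarrow> \<beta> j = 0"
  shows "finite {c. (\<forall>v. v \<notin> {1..n} \<longrightarrow> c v = 0) \<and> (\<forall>v\<in>{1..n}. 1 \<le> c v) \<and> P c \<and> Q c
       \<and> (\<forall>j. card {v\<in>{1..n}. c v = j} = \<beta> j)}" (is "finite ?S")
proof (rule finite_subset)
  show "?S \<subseteq> {f. \<forall>x. (x \<in> {1..n} \<longrightarrow> f x \<in> {..M}) \<and> (x \<notin> {1..n} \<longrightarrow> f x = 0)}"
  proof (rule subsetI, rule CollectI, intro allI conjI impI)
    fix f x assume f: "f \<in> ?S"
    then have f0: "\<forall>v. v \<notin> {1..n} \<longrightarrow> f v = 0" and fc: "\<forall>j. card {v\<in>{1..n}. f v = j} = \<beta> j"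
      by blast+
    {
      assume x: "x \<in> {1..n}"
      show "f x \<in> {..M}"
      proof (rule ccontr)
        assume "f x \<notin> {..M}"
        hence "M < f x" by simp
        hence "\<beta> (f x) = 0" by (rule big)
        hence c0: "card {v\<in>{1..n}. f v = f x} = 0" using fc by simp
        have fin: "finite {v\<in>{1..n}. f v = f x}" by (rule finite_subset[of _ "{1..n}"]) auto
        have "x \<in> {v\<in>{1..n}. f v = f x}" using x by simp
        then have "card {v\<in>{1..n}. f v = f x} > 0" using fin card_gt_0_iff by blast
        then show False using c0 by linarith
      qed
    }
    {
      assume "x \<notin> {1..n}"
      then show "f x = 0" using f0 by blast
    }
  qed
  show "finite {f. \<forall>x. (x \<in> {1..n} \<longrightarrow> f x \<in> {..M}) \<and> (x \<notin> {1..n} \<longrightarrow> f x = (0::nat))}"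
    by (rule finite_set_of_finite_funs) simp_all
qed

lemma main_gen:
  assumes lp: "labeled_path s"
  and HK: "\<And>c. proper_col s c \<Longrightarrow> asc s c = K \<longleftrightarrow> dirP s c b"
  and HK': "\<And>c. proper_col s c \<Longrightarrow> asc s c = K' \<longleftrightarrow> dirP s c (\<lambda>i. \<not> b i)"
  and gt: "card (minset (length s) (\<lambda>i. \<not> b i)) < card (minset (length s) b)"
  shows "(\<exists>\<alpha>. cqf_coeff s K \<alpha> \<noteq> cqf_coeff s K' \<alpha>) \<and>
         (\<exists>\<alpha> \<pi>. bij \<pi> \<and> \<pi> 0 = 0 \<and> cqf_coeff s K (\<alpha> \<circ> \<pi>) \<noteq> cqf_coeff s K \<alpha>)"
proof -
  define n where "n = length s"
  define d where "d = cc b n"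
  have dist: "distinct s" and st: "set s = {1..n}" using lp by (auto simp: labeled_path_def n_def)
  have inj: "inj_on (nth s) {..<n}" using dist by (auto intro!: inj_on_nth simp: n_def)
  define col where "col v = (if v \<in> {1..n} then d (inv_into {..<n} (nth s) v) else 0)" for v
  have col_nth: "col (s!i) = d i" if "i < n" for i
  proof -
    have "s!i \<in> {1..n}" using that st n_def by (metis nth_mem)
    moreover have "inv_into {..<n} (nth s) (s!i) = i" using inj that by (simp add: inv_into_f_f)
    ultimately show ?thesis by (simp add: col_def)
  qed
  have "minset n b \<noteq> {}" using gt n_def by auto
  hence npos: "0 < n" by (auto simp: minset_def)
  have edge: "col (s!i) = d i \<and> col (s!Suc i) = d (Suc i) \<and> (d i < d (Suc i) \<longleftrightarrow> b i) \<and> d i \<noteq> d (Suc i)"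
    if "Suc i < length s" for i
  proof -
    have "Suc i < n" using that n_def by simp
    then show ?thesis using col_nth[of i] col_nth[of "Suc i"] cc_dir[of i n b] unfolding d_def by simp
  qed
  have pc: "proper_col s col" unfolding proper_col_def
    using edge by simp
  have dir: "dirP s col b" unfolding dirP_def
    using edge by simp
  have ascK: "asc s col = K" using HK[OF pc] dir by simp
  define \<alpha> where "\<alpha> j = card {v\<in>{1..n}. col v = j}" for j
  have \<alpha>_eq: "\<alpha> j = card {i. i<n \<and> d i = j}" for j
  proof -
    have "\<alpha> j = card {i. i<n \<and> col (s!i) = j}" using card_type[OF lp] by (simp add: \<alpha>_def n_def)
    also have "{i. i<n \<and> col (s!i) = j} = {i. i<n \<and> d i = j}" using col_nth by auto
    finally show ?thesis .
  qed
  define M where "M = Max (d ` {..<n})"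
  have dle: "d i \<le> M" if "i < n" for i using that by (simp add: M_def)
  have M1: "1 \<le> M" using dle[OF npos] cc_pos[of b n 0] d_def by simp
  have \<alpha>_big: "\<alpha> j = 0" if "j > M" for j
  proof -
    have "{i. i<n \<and> d i = j} = {}" using dle that by fastforce
    then show ?thesis by (simp add: \<alpha>_eq)
  qed
  have \<alpha>1: "\<alpha> 1 = card (minset n b)"
  proof -
    have "{i. i<n \<and> d i = 1} = minset n b" using cc_one d_def by (auto simp: minset_def)
    then show ?thesis by (simp add: \<alpha>_eq)
  qed
  have colS: "col \<in> {c. (\<forall>v. v \<notin> {1..n} \<longrightarrow> c v = 0) \<and> (\<forall>v\<in>{1..n}. 1 \<le> c v) \<and> proper_col s c \<and> asc s c = K
       \<and> (\<forall>j. card {v\<in>{1..n}. c v = j} = \<alpha> j)}"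
    using pc ascK by (auto simp: col_def \<alpha>_def d_def cc_def)
  have finS: "finite {c. (\<forall>v. v \<notin> {1..n} \<longrightarrow> c v = 0) \<and> (\<forall>v\<in>{1..n}. 1 \<le> c v) \<and> proper_col s c \<and> asc s c = K
       \<and> (\<forall>j. card {v\<in>{1..n}. c v = j} = \<alpha> j)}"
    by (rule coeff_finite[of M \<alpha> n "proper_col s" "\<lambda>c. asc s c = K", OF \<alpha>_big])
  have posK: "cqf_coeff s K \<alpha> > 0"
    unfolding cqf_coeff_def n_def[symmetric]
    by (rule iffD2[OF card_gt_0_iff]) (use colS finS in blast)
  have pos_facts: "(\<forall>i. Suc i < n \<longrightarrow> c (s!i) \<noteq> c (s!Suc i)) \<and> (\<forall>i. i < n \<longrightarrow> 1 \<le> c (s!i))"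
    if "proper_col s c" "\<forall>v\<in>{1..n}. 1 \<le> c v" for c
    using that st by (auto simp: proper_col_def n_def)
  have part1: "cqf_coeff s K' \<alpha> = 0"
  proof -
    have "{c. (\<forall>v. v \<notin> {1..n} \<longrightarrow> c v = 0) \<and> (\<forall>v\<in>{1..n}. 1 \<le> c v) \<and> proper_col s c \<and> asc s c = K'
       \<and> (\<forall>j. card {v\<in>{1..n}. c v = j} = \<alpha> j)} = {}"
    proof (rule ccontr)
      assume "\<not> ?thesis"
      then obtain c where c: "\<forall>v\<in>{1..n}. 1 \<le> c v" "proper_col s c" "asc s c = K'"
         "\<forall>j. card {v\<in>{1..n}. c v = j} = \<alpha> j" by auto
      have dc: "dirP s c (\<lambda>i. \<not> b i)" by (rule iffD1[OF HK'[OF c(2)] c(3)])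
      have "{i. i<n \<and> c (s!i) = 1} \<subseteq> minset n (\<lambda>i. \<not> b i)"
        apply (rule min_sub)
        using dc pos_facts[OF c(2) c(1)] by (auto simp: dirP_def n_def)
      hence "card {i. i<n \<and> c (s!i) = 1} \<le> card (minset n (\<lambda>i. \<not> b i))"
        by (rule card_mono[rotated]) (auto simp: minset_def)
      moreover have "card {i. i<n \<and> c (s!i) = 1} = \<alpha> 1"
        using c(4) card_type[OF lp, of c 1] by (simp add: n_def)
      ultimately show False using gt \<alpha>1 n_def by simp
    qed
    then show ?thesis unfolding cqf_coeff_def n_def[symmetric] by (metis card.empty)
  qed
  define \<pi> where "\<pi> j = (if j = 1 then M else if j = M then 1 else j)" for j :: nat
  have \<pi>\<pi>: "\<pi> \<circ> \<pi> = id" by (auto simp: \<pi>_def fun_eq_iff)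
  have bij: "bij \<pi>" using \<pi>\<pi> by (metis o_bij)
  have \<pi>0: "\<pi> 0 = 0" using M1 by (auto simp: \<pi>_def)
  have part2: "cqf_coeff s K (\<alpha> \<circ> \<pi>) \<noteq> cqf_coeff s K \<alpha>"
  proof
    assume eq: "cqf_coeff s K (\<alpha> \<circ> \<pi>) = cqf_coeff s K \<alpha>"
    then have "cqf_coeff s K (\<alpha> \<circ> \<pi>) \<noteq> 0" using posK by simp
    define S where "S = {c. (\<forall>v. v \<notin> {1..n} \<longrightarrow> c v = 0) \<and> (\<forall>v\<in>{1..n}. 1 \<le> c v) \<and> proper_col s c \<and> asc s c = K
       \<and> (\<forall>j. card {v\<in>{1..n}. c v = j} = (\<alpha> \<circ> \<pi>) j)}"
    have "card S \<noteq> 0" using \<open>cqf_coeff s K (\<alpha> \<circ> \<pi>) \<noteq> 0\<close> unfolding cqf_coeff_def n_def[symmetric] S_def .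
    then have "S \<noteq> {}" by (rule contrapos_nn) simp
    then obtain c where cT: "c \<in> S" using ex_in_conv[of S] by iprover
    then have c: "\<forall>v\<in>{1..n}. 1 \<le> c v" "proper_col s c" "asc s c = K"
         "\<forall>j. card {v\<in>{1..n}. c v = j} = \<alpha> (\<pi> j)"
      unfolding S_def mem_Collect_eq comp_apply by blast+
    have dc: "dirP s c b" by (rule iffD1[OF HK[OF c(2)] c(3)])
    have cle: "c (s!i) \<le> M" if "i < n" for i
    proof (rule ccontr)
      assume "\<not> ?thesis"
      hence j: "c (s!i) > M" by simp
      have pj: "\<pi> (c (s!i)) = c (s!i)" unfolding \<pi>_def using j M1 by simp
      have "card {v\<in>{1..n}. c v = c (s!i)} = \<alpha> (\<pi> (c (s!i)))" using c(4) by blast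
      also have "\<dots> = 0" unfolding pj by (rule \<alpha>_big[OF j])
      finally have c0: "card {v\<in>{1..n}. c v = c (s!i)} = 0" .
      have "s!i \<in> set s" using that n_def by simp
      hence "s!i \<in> {1..n}" using st by simp
      hence mem: "s!i \<in> {v\<in>{1..n}. c v = c (s!i)}" by simp
      have fin: "finite {v\<in>{1..n}. c v = c (s!i)}" by (rule finite_subset[of _ "{1..n}"]) auto
      have "card {v\<in>{1..n}. c v = c (s!i)} > 0" using card_gt_0_iff fin mem by blast
      then show False using c0 by linarith
    qed
    have "{i. i<n \<and> c (s!i) = M} \<subseteq> minset n (\<lambda>i. \<not> b i)"
      apply (rule max_sub)
      using dc pos_facts[OF c(2) c(1)] cle by (auto simp: dirP_def n_def)
    hence "card {i. i<n \<and> c (s!i) = M} \<le> card (minset n (\<lambda>i. \<not> b i))"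
      by (rule card_mono[rotated]) (auto simp: minset_def)
    moreover have "card {i. i<n \<and> c (s!i) = M} = \<alpha> (\<pi> M)"
      using c(4) card_type[OF lp, of c M] by (simp add: n_def)
    moreover have "\<pi> M = 1" by (simp add: \<pi>_def)
    ultimately show False using gt \<alpha>1 n_def by simp
  qed
  show ?thesis using part1 part2 posK bij \<pi>0 by (metis less_numeral_extra(3))
qed


theorem proposition4p2:
  fixes s :: "nat list"
  assumes "labeled_path s"
    and "LU_corners s \<noteq> RL_corners s"
  shows "\<not> cqf_palindromic s \<and> \<not> cqf_symmetric s"
proof -
  have neq: "card (minset (length s) (aa s)) \<noteq> card (minset (length s) (\<lambda>i. \<not> aa s i))"
    using assms(2) by (simp add: LU_eq RL_eq)
  have H1: "\<And>c. proper_col s c \<Longrightarrow> asc s c = length s - 1 \<longleftrightarrow> dirP s c (aa s)"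
    using asc_top[OF assms(1)] by blast
  have H0: "\<And>c. proper_col s c \<Longrightarrow> asc s c = 0 \<longleftrightarrow> dirP s c (\<lambda>i. \<not> aa s i)"
    using asc_bot[OF assms(1)] by blast
  show ?thesis
  proof (cases "card (minset (length s) (\<lambda>i. \<not> aa s i)) < card (minset (length s) (aa s))")
    case True
    from main_gen[OF assms(1) H1 H0 True] obtain \<alpha> \<alpha>' \<pi> where
      a: "cqf_coeff s (length s - 1) \<alpha> \<noteq> cqf_coeff s 0 \<alpha>"
      and b: "bij \<pi>" "\<pi> 0 = 0" "cqf_coeff s (length s - 1) (\<alpha>' \<circ> \<pi>) \<noteq> cqf_coeff s (length s - 1) \<alpha>'"
      by blast
    have "\<not> cqf_palindromic s" using a unfolding cqf_palindromic_def
      by (metis diff_zero le0)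
    moreover have "\<not> cqf_symmetric s" using b unfolding cqf_symmetric_def by blast
    ultimately show ?thesis by simp
  next
    case False
    hence lt: "card (minset (length s) (\<lambda>i. \<not> \<not> aa s i)) < card (minset (length s) (\<lambda>i. \<not> aa s i))"
      using neq by simp
    have H1': "\<And>c. proper_col s c \<Longrightarrow> asc s c = length s - 1 \<longleftrightarrow> dirP s c (\<lambda>i. \<not> \<not> aa s i)"
      using H1 by simp
    from main_gen[OF assms(1) H0 H1' lt] obtain \<alpha> \<alpha>' \<pi> where
      a: "cqf_coeff s 0 \<alpha> \<noteq> cqf_coeff s (length s - 1) \<alpha>"
      and b: "bij \<pi>" "\<pi> 0 = 0" "cqf_coeff s 0 (\<alpha>' \<circ> \<pi>) \<noteq> cqf_coeff s 0 \<alpha>'"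
      by blast
    have "\<not> cqf_palindromic s" using a unfolding cqf_palindromic_def
      by (metis diff_zero le0)
    moreover have "\<not> cqf_symmetric s" using b unfolding cqf_symmetric_def by blast
    ultimately show ?thesis by simp
  qed
qed

end
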